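(* Let $T>0$. Let $g:\mathbb{R}\to\mathbb{R}$ be a continuous, odd, sublinear function, and let $k:\mathbb{R}\to\mathbb{R}$ be a continuous, odd, $T$-periodic function with $\frac{1}{T}\int_0^T k(t)\,dt=0$. Then the equation $$u''+g(u)=k(t)$$ has an odd $T$-periodic solution $u\in C^2(\mathbb{R})$. Moreover, the set of odd $T$-periodic solutions of this equation is bounded in the supremum norm.
   Context: A function $h$ is odd if $h(-x)=-h(x)$ for all $x$. The function $g$ is called sublinear if for every $\varepsilon>0$ there exists $M=M(\varepsilon)>0$ such that $|g(x)|\le M+\varepsilon|x|$ for all $x\in\mathbb{R}$. *)

theory Defs
  imports "HOL-Analysis.Analysis"
begin

definition odd_fun :: "(real \<Rightarrow> real) \<Rightarrow> bool" where
  "odd_fun h \<longleftrightarrow> (\<forall>x. h (-x) = - h x)"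

definition sublinear :: "(real \<Rightarrow> real) \<Rightarrow> bool" where
  "sublinear g \<longleftrightarrow> (\<forall>\<epsilon>>0. \<exists>M>0. \<forall>x. \<bar>g x\<bar> \<le> M + \<epsilon> * \<bar>x\<bar>)"

definition periodic_fun :: "real \<Rightarrow> (real \<Rightarrow> real) \<Rightarrow> bool" where
  "periodic_fun T f \<longleftrightarrow> (\<forall>t. f (t + T) = f t)"

definition C2_solution :: "(real \<Rightarrow> real) \<Rightarrow> (real \<Rightarrow> real) \<Rightarrow> (real \<Rightarrow> real) \<Rightarrow> bool" where
  "C2_solution g k u \<longleftrightarrow>
     (\<exists>u' u''. (\<forall>t. (u has_real_derivative u' t) (at t)) \<and>
               (\<forall>t. (u' has_real_derivative u'' t) (at t)) \<and>
               continuous_on UNIV u'' \<and>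
               (\<forall>t. u'' t + g (u t) = k t))"

end

theory Submission
  imports Defs "HOL-Complex_Analysis.Great_Picard"
begin


definition prim :: "(real \<Rightarrow> real) \<Rightarrow> real \<Rightarrow> real" where
  "prim f t = integral {0..t} f - integral {t..0} f"

lemma prim_eq_from:
  assumes f: "continuous_on UNIV f" and "a \<le> 0" "a \<le> x"
  shows "prim f x = integral {a..x} f - integral {a..0} f"
proof (cases "0 \<le> x")
  case True
  have "integral {a..0} f + integral {0..x} f = integral {a..x} f"
    by (rule Henstock_Kurzweil_Integration.integral_combine) (use assms True in \<open>auto intro: integrable_continuous_real continuous_on_subset[OF f]\<close>)
  moreover have "integral {x..0} f = 0"
    using True by (cases "x = 0") auto
  ultimately show ?thesis unfolding prim_def by linarith
next
  case False
  have "integral {a..x} f + integral {x..0} f = integral {a..0} f"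
    by (rule Henstock_Kurzweil_Integration.integral_combine) (use assms False in \<open>auto intro: integrable_continuous_real continuous_on_subset[OF f]\<close>)
  moreover have "integral {0..x} f = 0"
    using False by auto
  ultimately show ?thesis unfolding prim_def by linarith
qed

lemma prim_deriv:
  assumes f: "continuous_on UNIV f"
  shows "(prim f has_real_derivative f t) (at t)"
proof -
  define a where "a = min 0 t - 1"
  define b where "b = max 0 t + 1"
  have "((\<lambda>x. integral {a..x} f) has_real_derivative f t) (at t within {a..b})"
    by (rule integral_has_real_derivative) (auto simp: a_def b_def intro: continuous_on_subset[OF f])
  moreover have "at t within {a..b} = at t"
    by (rule at_within_Icc_at) (auto simp: a_def b_def)
  ultimately have "((\<lambda>x. integral {a..x} f - integral {a..0} f) has_real_derivative f t) (at t)"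
    by (auto intro!: derivative_eq_intros)
  then show ?thesis
    by (rule has_field_derivative_transform_within_open[where S="{a<..<b}"])
       (auto simp: a_def b_def intro!: prim_eq_from[OF f, symmetric])
qed

lemma prim_0 [simp]: "prim f 0 = 0"
  by (simp add: prim_def)

lemma prim_pos: "0 \<le> t \<Longrightarrow> prim f t = integral {0..t} f"
  unfolding prim_def by (cases "t = 0") auto

lemma prim_cont: "continuous_on UNIV f \<Longrightarrow> continuous_on UNIV (prim f)"
  using prim_deriv
  by (meson DERIV_isCont continuous_at_imp_continuous_on)



lemma deriv_zero_const:
  assumes "\<And>x. (F has_real_derivative 0) (at x)"
  shows "F x = F y"
  using DERIV_isconst_all assms by blast

lemma sol_construct:
  fixes f :: "real \<Rightarrow> real" and L :: real
  assumes L: "L > 0" and f: "continuous_on UNIV f" and fo: "odd_fun f"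
    and fp: "periodic_fun (2*L) f"
  defines "\<Phi> \<equiv> prim f" and "\<Psi> \<equiv> prim (prim f)"
  shows "odd_fun (\<lambda>t. \<Psi> t - t * \<Psi> L / L)"
    and "periodic_fun (2*L) (\<lambda>t. \<Psi> t - t * \<Psi> L / L)"
    and "\<And>t. ((\<lambda>t. \<Psi> t - t * \<Psi> L / L) has_real_derivative (\<Phi> t - \<Psi> L / L)) (at t)"
    and "\<And>t. ((\<lambda>t. \<Phi> t - \<Psi> L / L) has_real_derivative f t) (at t)"
proof -
  have dPhi: "\<And>t. (\<Phi> has_real_derivative f t) (at t)"
    unfolding \<Phi>_def by (rule prim_deriv[OF f])
  have cPhi: "continuous_on UNIV \<Phi>" unfolding \<Phi>_def by (rule prim_cont[OF f])
  have dPsi: "\<And>t. (\<Psi> has_real_derivative \<Phi> t) (at t)"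
    unfolding \<Psi>_def \<Phi>_def by (rule prim_deriv[OF cPhi[unfolded \<Phi>_def]])
  have fneg: "f (-x) = - f x" for x using fo unfolding odd_fun_def by blast
  have fper: "f (x + 2*L) = f x" for x using fp unfolding periodic_fun_def by blast
  have Phi_even: "\<Phi> (-x) = \<Phi> x" for x
  proof -
    have "\<And>x. ((\<lambda>x. \<Phi> x - \<Phi> (-x)) has_real_derivative 0) (at x)"
    proof -
      fix x
      have "((\<lambda>x. \<Phi> x - \<Phi> (-x)) has_real_derivative (f x - f (-x) * (-1))) (at x)"
        by (rule derivative_eq_intros DERIV_chain2[OF dPhi] dPhi | simp)+
      then show "((\<lambda>x. \<Phi> x - \<Phi> (-x)) has_real_derivative 0) (at x)"
        by (simp add: fneg)
    qed
    from deriv_zero_const[OF this, of x 0] show ?thesis by simp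
  qed
  have Phi_per: "\<Phi> (x + 2*L) = \<Phi> x" for x
  proof -
    have "\<And>x. ((\<lambda>x. \<Phi> (x + 2*L) - \<Phi> x) has_real_derivative 0) (at x)"
    proof -
      fix x
      have "((\<lambda>x. \<Phi> (x + 2*L) - \<Phi> x) has_real_derivative (f (x + 2*L) * 1 - f x)) (at x)"
        by (rule derivative_eq_intros DERIV_chain2[OF dPhi] dPhi | simp)+
      then show "((\<lambda>x. \<Phi> (x + 2*L) - \<Phi> x) has_real_derivative 0) (at x)"
        by (simp add: fper)
    qed
    from deriv_zero_const[OF this, of x "-L"] Phi_even[of L] show ?thesis
      by (simp add: algebra_simps)
  qed
  have Psi_odd: "\<Psi> (-x) = - \<Psi> x" for x
  proof -
    have "\<And>x. ((\<lambda>x. \<Psi> x + \<Psi> (-x)) has_real_derivative 0) (at x)"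
    proof -
      fix x
      have "((\<lambda>x. \<Psi> x + \<Psi> (-x)) has_real_derivative (\<Phi> x + \<Phi> (-x) * (-1))) (at x)"
        by (rule derivative_eq_intros DERIV_chain2[OF dPsi] dPsi | simp)+
      then show "((\<lambda>x. \<Psi> x + \<Psi> (-x)) has_real_derivative 0) (at x)"
        by (simp add: Phi_even)
    qed
    from deriv_zero_const[OF this, of x 0] show ?thesis by (simp add: \<Psi>_def)
  qed
  have Psi_per: "\<Psi> (x + 2*L) = \<Psi> x + 2 * \<Psi> L" for x
  proof -
    have "\<And>x. ((\<lambda>x. \<Psi> (x + 2*L) - \<Psi> x) has_real_derivative 0) (at x)"
    proof -
      fix x
      have "((\<lambda>x. \<Psi> (x + 2*L) - \<Psi> x) has_real_derivative (\<Phi> (x + 2*L) * 1 - \<Phi> x)) (at x)"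
        by (rule derivative_eq_intros DERIV_chain2[OF dPsi] dPsi | simp)+
      then show "((\<lambda>x. \<Psi> (x + 2*L) - \<Psi> x) has_real_derivative 0) (at x)"
        by (simp add: Phi_per)
    qed
    from deriv_zero_const[OF this, of x "-L"] Psi_odd[of L] show ?thesis
      by (simp add: algebra_simps)
  qed
  show "odd_fun (\<lambda>t. \<Psi> t - t * \<Psi> L / L)"
    unfolding odd_fun_def by (simp add: Psi_odd)
  show "periodic_fun (2*L) (\<lambda>t. \<Psi> t - t * \<Psi> L / L)"
    unfolding periodic_fun_def
  proof
    fix t
    show "\<Psi> (t + 2*L) - (t + 2*L) * \<Psi> L / L = \<Psi> t - t * \<Psi> L / L"
      using L Psi_per[of t] by (simp add: field_simps)
  qed
  show "((\<lambda>t. \<Psi> t - t * \<Psi> L / L) has_real_derivative (\<Phi> t - \<Psi> L / L)) (at t)" for t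
  proof -
    have e: "(\<lambda>t. \<Psi> t - t * \<Psi> L / L) = (\<lambda>t. \<Psi> t - t * (\<Psi> L / L))" by simp
    show ?thesis unfolding e
      by (rule derivative_eq_intros dPsi | simp)+
  qed
  show "((\<lambda>t. \<Phi> t - \<Psi> L / L) has_real_derivative f t) (at t)" for t
    by (rule derivative_eq_intros dPhi | simp)+
qed



lemma per_nat: "periodic_fun T u \<Longrightarrow> u (t + real n * T) = u t"
proof (induction n arbitrary: t)
  case (Suc n)
  have "u (t + real (Suc n) * T) = u ((t + real n * T) + T)" by (simp add: algebra_simps)
  also have "\<dots> = u (t + real n * T)" using Suc.prems unfolding periodic_fun_def by blast
  finally show ?case using Suc by simp
qed simp

lemma per_int: "periodic_fun T u \<Longrightarrow> u (t + of_int m * T) = u t"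
proof (cases "m \<ge> 0")
  case True
  assume p: "periodic_fun T u"
  obtain n where "m = int n" using True nonneg_eq_int by blast
  then show ?thesis using per_nat[OF p] by simp
next
  case False
  assume p: "periodic_fun T u"
  obtain n where "- m = int n" using False nonneg_eq_int[of "-m"] by force
  then have n: "m = - int n" by simp
  have "u (t + of_int m * T) = u ((t + of_int m * T) + real n * T)" using per_nat[OF p] by simp
  also have "\<dots> = u t" using n by simp
  finally show ?thesis .
qed

lemma reduce_half:
  assumes T: "T > 0"
  shows "\<exists>s \<sigma>. s \<in> {0..T/2} \<and> (\<sigma> = 1 \<or> \<sigma> = -1) \<and>
     (\<forall>u. odd_fun u \<longrightarrow> periodic_fun T u \<longrightarrow> u t = \<sigma> * u s)"
proof -
  define m where "m = \<lfloor>t / T\<rfloor>"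
  define r where "r = t - of_int m * T"
  have "of_int m \<le> t / T" "t / T < of_int m + 1" unfolding m_def by linarith+
  then have r0: "0 \<le> r" and r1: "r < T" using T unfolding r_def by (auto simp: field_simps)
  have ur: "u t = u r" if "periodic_fun T u" for u
    using per_int[OF that, of r m] unfolding r_def by simp
  show ?thesis
  proof (cases "r \<le> T/2")
    case True
    then show ?thesis using r0 ur by (intro exI[of _ r] exI[of _ 1]) auto
  next
    case False
    have "u t = -1 * u (T - r)" if "odd_fun u" "periodic_fun T u" for u
    proof -
      have "u t = u (r - T)" using ur[OF that(2)] per_int[OF that(2), of "r - T" 1] by simp
      also have "\<dots> = u (- (T - r))" by simp
      also have "\<dots> = - u (T - r)" using that(1) unfolding odd_fun_def by blast
      finally show ?thesis by simp
    qed
    then show ?thesis using False r1 by (intro exI[of _ "T - r"] exI[of _ "-1"]) auto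
  qed
qed

lemma odd_per_eq:
  assumes T: "T > 0" and "odd_fun u" "periodic_fun T u" "odd_fun w" "periodic_fun T w"
    and eq: "\<And>s. s \<in> {0..T/2} \<Longrightarrow> u s = w s"
  shows "u t = w t"
proof -
  obtain s \<sigma> where "s \<in> {0..T/2}" and
    "\<forall>u. odd_fun u \<longrightarrow> periodic_fun T u \<longrightarrow> u t = \<sigma> * u s"
    using reduce_half[OF T, of t] by blast
  then have "u t = \<sigma> * u s" "w t = \<sigma> * w s" using assms(2-5) by blast+
  then show ?thesis using eq[OF \<open>s \<in> {0..T/2}\<close>] by simp
qed

lemma odd_per_bound:
  assumes T: "T > 0" and "odd_fun u" "periodic_fun T u"
    and b: "\<And>s. s \<in> {0..T/2} \<Longrightarrow> \<bar>u s\<bar> \<le> B"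
  shows "\<bar>u t\<bar> \<le> B"
proof -
  obtain s \<sigma> where "s \<in> {0..T/2}" "\<sigma> = 1 \<or> \<sigma> = -1" and
    "\<forall>u. odd_fun u \<longrightarrow> periodic_fun T u \<longrightarrow> u t = \<sigma> * u s"
    using reduce_half[OF T, of t] by blast
  then show ?thesis using assms by (auto simp: abs_mult)
qed

lemma apriori:
  fixes u u' u'' g k :: "real \<Rightarrow> real"
  assumes L: "L > 0" and M: "M \<ge> 0" and eps: "\<epsilon> \<ge> 0" "\<epsilon> * L^2 \<le> 1/4"
    and gb: "\<And>x. \<bar>g x\<bar> \<le> M + \<epsilon> * \<bar>x\<bar>"
    and kb: "\<And>t. t \<in> {0..L} \<Longrightarrow> \<bar>k t\<bar> \<le> K"
    and d1: "\<And>t. (u has_real_derivative u' t) (at t)"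
    and d2: "\<And>t. (u' has_real_derivative u'' t) (at t)"
    and eq: "\<And>t. u'' t + g (u t) = k t"
    and u0: "u 0 = 0" and uL: "u L = 0"
  shows "\<And>t. t \<in> {0..L} \<Longrightarrow> \<bar>u t\<bar> \<le> 2 * L^2 * (K + M)"
proof -
  have K0: "K \<ge> 0" using kb[of 0] L by auto
  have cu: "continuous_on {0..L} (\<lambda>t. \<bar>u t\<bar>)"
    using d1 by (intro continuous_intros) (meson DERIV_isCont continuous_at_imp_continuous_on)
  obtain t0 where t0: "t0 \<in> {0..L}" and mx: "\<And>t. t \<in> {0..L} \<Longrightarrow> \<bar>u t\<bar> \<le> \<bar>u t0\<bar>"
    using continuous_attains_sup[OF compact_Icc _ cu] L by auto
  define m where "m = \<bar>u t0\<bar>"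
  have m0: "m \<ge> 0" unfolding m_def by simp
  have u2b: "\<bar>u'' z\<bar> \<le> K + M + \<epsilon> * m" if "z \<in> {0..L}" for z
  proof -
    have "\<bar>u'' z\<bar> = \<bar>k z - g (u z)\<bar>" using eq[of z] by (simp add: algebra_simps)
    also have "\<dots> \<le> \<bar>k z\<bar> + \<bar>g (u z)\<bar>" by simp
    also have "\<dots> \<le> K + (M + \<epsilon> * \<bar>u z\<bar>)" using kb[OF that] gb[of "u z"] by simp
    also have "\<epsilon> * \<bar>u z\<bar> \<le> \<epsilon> * m" using mx[OF that] eps unfolding m_def by (simp add: mult_left_mono)
    finally show ?thesis by simp
  qed
  obtain c where c: "0 < c" "c < L" "u L - u 0 = (L - 0) * u' c"
    using MVT2[OF L, of u u'] d1 by blast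
  have uc: "u' c = 0" using c L u0 uL by simp
  have u1b: "\<bar>u' t\<bar> \<le> L * (K + M + \<epsilon> * m)" if "t \<in> {0..L}" for t
  proof (cases "t = c")
    case True then show ?thesis using uc L K0 M m0 eps by simp
  next
    case False
    define a where "a = min t c"
    define b where "b = max t c"
    have ab: "a < b" using False unfolding a_def b_def by auto
    obtain z where z: "a < z" "z < b" "u' b - u' a = (b - a) * u'' z"
      using MVT2[OF ab, of u' u''] d2 by blast
    have zL: "z \<in> {0..L}" using z that c unfolding a_def b_def by auto
    have "\<bar>u' t\<bar> = \<bar>u' b - u' a\<bar>" using uc unfolding a_def b_def by (auto simp: min_def max_def)
    also have "\<dots> = \<bar>b - a\<bar> * \<bar>u'' z\<bar>" using z by (simp add: abs_mult)
    also have "\<dots> \<le> L * (K + M + \<epsilon> * m)"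
      by (rule mult_mono) (use u2b[OF zL] that c in \<open>auto simp: a_def b_def\<close>)
    finally show ?thesis .
  qed
  have ub: "\<bar>u t\<bar> \<le> L^2 * (K + M + \<epsilon> * m)" if "t \<in> {0..L}" for t
  proof (cases "t = 0")
    case True then show ?thesis using u0 K0 M m0 eps by simp
  next
    case False
    then have tp: "0 < t" using that by auto
    obtain z where z: "0 < z" "z < t" "u t - u 0 = (t - 0) * u' z"
      using MVT2[OF tp, of u u'] d1 by blast
    have "\<bar>u t\<bar> = t * \<bar>u' z\<bar>" using z u0 tp by (simp add: abs_mult)
    also have "\<dots> \<le> L * (L * (K + M + \<epsilon> * m))"
      by (rule mult_mono) (use u1b[of z] z that in auto)
    finally show ?thesis by (simp add: power2_eq_square)
  qed
  have "m \<le> L^2 * (K + M) + (\<epsilon> * L^2) * m"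
    using ub[OF t0] unfolding m_def by (simp add: algebra_simps)
  also have "(\<epsilon> * L^2) * m \<le> m / 4" using mult_right_mono[OF eps(2) m0] by simp
  finally have "m \<le> m / 4 + L^2 * (K + M)" by simp
  moreover have "0 \<le> L^2 * (K + M)" using K0 M by simp
  ultimately have "m \<le> 2 * L^2 * (K + M)" by linarith
  then show "\<And>t. t \<in> {0..L} \<Longrightarrow> \<bar>u t\<bar> \<le> 2 * L^2 * (K + M)"
    using mx unfolding m_def by (meson order.trans)
qed



definition I1 :: "(real \<Rightarrow> real) \<Rightarrow> real \<Rightarrow> real" where
  "I1 f t = integral {0..t} f"
definition I2 :: "(real \<Rightarrow> real) \<Rightarrow> real \<Rightarrow> real" where
  "I2 f t = integral {0..t} (I1 f)"

lemma I1_nonpos: "t \<le> 0 \<Longrightarrow> I1 f t = 0"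
  unfolding I1_def by (cases "t = 0") auto

lemma I2_nonpos: "t \<le> 0 \<Longrightarrow> I2 f t = 0"
  unfolding I2_def by (cases "t = 0") auto

lemma I1_cont_on:
  assumes "continuous_on {0..b} f"
  shows "continuous_on {0..b} (I1 f)"
  unfolding I1_def by (rule indefinite_integral_continuous_1) (rule integrable_continuous_real[OF assms])

lemma I1_cong: "(\<And>s. s \<in> {0..t} \<Longrightarrow> f s = g s) \<Longrightarrow> I1 f t = I1 g t"
  unfolding I1_def by (rule Henstock_Kurzweil_Integration.integral_cong) auto

lemma I2_cong:
  assumes "\<And>s. s \<in> {0..t} \<Longrightarrow> f s = g s"
  shows "I2 f t = I2 g t"
  unfolding I2_def
proof (rule Henstock_Kurzweil_Integration.integral_cong)
  fix r assume "r \<in> {0..t}"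
  then show "I1 f r = I1 g r" by (intro I1_cong assms) auto
qed

lemma I1_diff:
  assumes "continuous_on {0..t} f" "continuous_on {0..t} g"
  shows "I1 (\<lambda>s. f s - g s) t = I1 f t - I1 g t"
  unfolding I1_def
  by (rule Henstock_Kurzweil_Integration.integral_diff) (use assms in \<open>auto intro: integrable_continuous_real\<close>)

lemma I2_diff:
  assumes f: "continuous_on {0..t} f" and g: "continuous_on {0..t} g"
  shows "I2 (\<lambda>s. f s - g s) t = I2 f t - I2 g t"
proof -
  have "I2 (\<lambda>s. f s - g s) t = integral {0..t} (\<lambda>r. I1 f r - I1 g r)"
    unfolding I2_def
    by (rule Henstock_Kurzweil_Integration.integral_cong, rule I1_diff)
       (auto intro: continuous_on_subset[OF f] continuous_on_subset[OF g])
  also have "\<dots> = I2 f t - I2 g t"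
    unfolding I2_def
    by (rule Henstock_Kurzweil_Integration.integral_diff)
       (auto intro!: integrable_continuous_real I1_cont_on f g)
  finally show ?thesis .
qed

lemma I1_bound:
  assumes f: "continuous_on {0..t} f" and t: "0 \<le> t" and b: "\<And>s. s \<in> {0..t} \<Longrightarrow> \<bar>f s\<bar> \<le> B"
  shows "\<bar>I1 f t\<bar> \<le> B * t"
  using integral_bound[OF t f, of B] b unfolding I1_def by simp

lemma I2_bound:
  assumes f: "continuous_on {0..t} f" and t: "0 \<le> t" and b: "\<And>s. s \<in> {0..t} \<Longrightarrow> \<bar>f s\<bar> \<le> B"
  shows "\<bar>I2 f t\<bar> \<le> B * t^2"
proof (cases "t = 0")
  case True then show ?thesis by (simp add: I2_nonpos)
next
  case False
  have B0: "0 \<le> B" using b[of 0] t by (meson abs_ge_zero atLeastAtMost_iff order.trans order_refl)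
  have "\<bar>I1 f r\<bar> \<le> B * t" if "r \<in> {0..t}" for r
  proof -
    have "\<bar>I1 f r\<bar> \<le> B * r"
      by (rule I1_bound) (use that b in \<open>auto intro: continuous_on_subset[OF f]\<close>)
    also have "\<dots> \<le> B * t" using that B0 by (simp add: mult_left_mono)
    finally show ?thesis .
  qed
  then have "\<bar>integral {0..t} (I1 f)\<bar> \<le> (B * t) * (t - 0)"
    using integral_bound[OF t I1_cont_on[OF f], of "B*t"] by simp
  then show ?thesis unfolding I2_def by (simp add: power2_eq_square)
qed

lemma I2_incr:
  assumes f: "continuous_on {0..t} f" and t: "0 \<le> t'" "t' \<le> t"
    and b: "\<And>s. s \<in> {0..t} \<Longrightarrow> \<bar>f s\<bar> \<le> B"
  shows "\<bar>I2 f t - I2 f t'\<bar> \<le> B * t * (t - t')"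
proof -
  have B0: "0 \<le> B" using b[of 0] t by (meson abs_ge_zero atLeastAtMost_iff order.trans order_refl)
  have c1: "continuous_on {0..t} (I1 f)" by (rule I1_cont_on[OF f])
  have "integral {0..t'} (I1 f) + integral {t'..t} (I1 f) = integral {0..t} (I1 f)"
    by (rule Henstock_Kurzweil_Integration.integral_combine) (use t in \<open>auto intro: integrable_continuous_real c1\<close>)
  then have e: "I2 f t - I2 f t' = integral {t'..t} (I1 f)" unfolding I2_def by linarith
  have "\<bar>I1 f r\<bar> \<le> B * t" if "r \<in> {t'..t}" for r
  proof -
    have "\<bar>I1 f r\<bar> \<le> B * r"
      by (rule I1_bound) (use that b t in \<open>auto intro: continuous_on_subset[OF f]\<close>)
    also have "\<dots> \<le> B * t" using that B0 by (simp add: mult_left_mono)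
    finally show ?thesis .
  qed
  then have "\<bar>integral {t'..t} (I1 f)\<bar> \<le> (B * t) * (t - t')"
    using integral_bound[OF t(2) continuous_on_subset[OF c1], of "B*t"] t by auto
  then show ?thesis using e by simp
qed

lemma I1_prim: "continuous_on UNIV f \<Longrightarrow> I1 f t = prim f (max 0 t)"
  by (cases "0 \<le> t") (auto simp: prim_pos I1_def I1_nonpos[unfolded I1_def])

lemma I1_cont: 
  assumes "continuous_on UNIV f" shows "continuous_on UNIV (I1 f)"
proof -
  have "I1 f = (\<lambda>t. prim f (max 0 t))" using I1_prim[OF assms] by auto
  moreover have "continuous_on UNIV (\<lambda>t. prim f (max 0 t))"
    by (rule continuous_on_compose2[OF prim_cont[OF assms]]) (auto intro: continuous_intros)
  ultimately show ?thesis by simp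
qed

lemma I2_cont:
  assumes "continuous_on UNIV f" shows "continuous_on UNIV (I2 f)"
proof -
  have "I2 f = I1 (I1 f)" unfolding I2_def I1_def by auto
  then show ?thesis using I1_cont[OF I1_cont[OF assms]] by simp
qed

lemma I2_prim:
  assumes "continuous_on UNIV f" "0 \<le> t"
  shows "prim (prim f) t = I2 f t"
proof -
  have "prim (prim f) t = integral {0..t} (prim f)" using assms by (simp add: prim_pos)
  also have "\<dots> = integral {0..t} (I1 f)"
    by (rule Henstock_Kurzweil_Integration.integral_cong) (auto simp: I1_def prim_pos)
  finally show ?thesis unfolding I2_def .
qed



fun Y :: "(real \<Rightarrow> real) \<Rightarrow> (real \<Rightarrow> real) \<Rightarrow> real \<Rightarrow> real \<Rightarrow> nat \<Rightarrow> real \<Rightarrow> real" where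
  "Y g k h v 0 t = v * t"
| "Y g k h v (Suc j) t = v * t + I2 (\<lambda>s. k s - g (Y g k h v j (s - h))) t"

lemma Y_cont:
  assumes g: "continuous_on UNIV g" and k: "continuous_on UNIV k"
  shows "continuous_on UNIV (Y g k h v j)"
proof (induction j)
  case 0
  have "Y g k h v 0 = (\<lambda>t. v * t)" by auto
  then show ?case by (auto intro: continuous_intros)
next
  case (Suc j)
  have c: "continuous_on UNIV (\<lambda>s. k s - g (Y g k h v j (s - h)))"
    by (intro continuous_intros k continuous_on_compose2[OF g] continuous_on_compose2[OF Suc]) auto
  have "Y g k h v (Suc j) = (\<lambda>t. v * t + I2 (\<lambda>s. k s - g (Y g k h v j (s - h))) t)" by auto
  then show ?case using I2_cont[OF c] by (auto intro: continuous_intros)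
qed

lemma Y_consist:
  assumes "t \<le> real j * h"
  shows "Y g k h v (Suc j) t = Y g k h v j t"
  using assms
proof (induction j arbitrary: t)
  case 0
  then show ?case by (simp add: I2_nonpos)
next
  case (Suc j)
  have "I2 (\<lambda>s. k s - g (Y g k h v (Suc j) (s - h))) t = I2 (\<lambda>s. k s - g (Y g k h v j (s - h))) t"
  proof (rule I2_cong)
    fix s assume s: "s \<in> {0..t}"
    have "s - h \<le> real j * h" using s Suc.prems by (auto simp: algebra_simps)
    then show "k s - g (Y g k h v (Suc j) (s - h)) = k s - g (Y g k h v j (s - h))"
      using Suc.IH by simp
  qed
  then show ?case by simp
qed

lemma Y_eq:
  assumes h: "0 < h" and NL: "L \<le> real N * h" and t: "t \<in> {0..L}"
  shows "Y g k h v (Suc N) t = v * t + I2 (\<lambda>s. k s - g (Y g k h v (Suc N) (s - h))) t"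
proof -
  have "I2 (\<lambda>s. k s - g (Y g k h v N (s - h))) t = I2 (\<lambda>s. k s - g (Y g k h v (Suc N) (s - h))) t"
  proof (rule I2_cong)
    fix s assume s: "s \<in> {0..t}"
    have "s - h \<le> real N * h" using s t NL h by auto
    then show "k s - g (Y g k h v N (s - h)) = k s - g (Y g k h v (Suc N) (s - h))"
      using Y_consist by simp
  qed
  then show ?thesis by simp
qed

lemma Y_contv:
  assumes g: "continuous_on UNIV g" and k: "continuous_on UNIV k"
    and h: "0 < h" "h \<le> L"
  shows "\<And>v0 e. e > 0 \<Longrightarrow> \<exists>d>0. \<forall>v. \<bar>v - v0\<bar> < d \<longrightarrow> (\<forall>t\<in>{-L..L}. \<bar>Y g k h v j t - Y g k h v0 j t\<bar> < e)"
proof (induction j)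
  case 0
  fix v0 e :: real assume e: "e > 0"
  show "\<exists>d>0. \<forall>v. \<bar>v - v0\<bar> < d \<longrightarrow> (\<forall>t\<in>{-L..L}. \<bar>Y g k h v 0 t - Y g k h v0 0 t\<bar> < e)"
  proof (intro exI[of _ "e / (L + 1)"] conjI allI impI ballI)
    show "0 < e / (L + 1)" using e h by auto
    fix v t assume v: "\<bar>v - v0\<bar> < e / (L + 1)" and t: "t \<in> {-L..L}"
    have "\<bar>Y g k h v 0 t - Y g k h v0 0 t\<bar> = \<bar>v - v0\<bar> * \<bar>t\<bar>" by (simp add: abs_mult[symmetric] algebra_simps)
    also have "\<dots> \<le> \<bar>v - v0\<bar> * (L + 1)" using t by (intro mult_left_mono) auto
    also have "\<dots> < e" using v h by (simp add: field_simps)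
    finally show "\<bar>Y g k h v 0 t - Y g k h v0 0 t\<bar> < e" .
  qed
next
  case (Suc j)
  fix v0 e :: real assume e: "e > 0"
  have L: "L > 0" using h by auto
  have cY0: "continuous_on {-L..L} (Y g k h v0 j)" using Y_cont[OF g k] by (rule continuous_on_subset) auto
  obtain Bj where Bj: "\<And>t. t \<in> {-L..L} \<Longrightarrow> \<bar>Y g k h v0 j t\<bar> \<le> Bj"
    using compact_imp_bounded[OF compact_continuous_image[OF cY0 compact_Icc]]
    unfolding bounded_iff by fastforce
  have uc: "uniformly_continuous_on {-Bj-1..Bj+1} g"
    by (rule compact_uniformly_continuous[OF continuous_on_subset[OF g] compact_Icc]) auto
  define e' where "e' = e / (2 * (L^2 + 1))"
  have "0 < 2 * (L^2 + 1)" by (simp add: add_nonneg_pos)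
  then have e'0: "e' > 0" using e unfolding e'_def by simp
  obtain \<eta> where \<eta>: "\<eta> > 0" and \<eta>g: "\<And>x y. x \<in> {-Bj-1..Bj+1} \<Longrightarrow> y \<in> {-Bj-1..Bj+1} \<Longrightarrow> \<bar>x - y\<bar> < \<eta> \<Longrightarrow> \<bar>g x - g y\<bar> < e'"
    using uc e'0 unfolding uniformly_continuous_on_def dist_real_def by metis
  obtain d1 where d1: "d1 > 0" and d1Y: "\<And>v. \<bar>v - v0\<bar> < d1 \<Longrightarrow> (\<forall>t\<in>{-L..L}. \<bar>Y g k h v j t - Y g k h v0 j t\<bar> < min \<eta> 1)"
    using Suc.IH[of "min \<eta> 1"] \<eta> by auto
  show "\<exists>d>0. \<forall>v. \<bar>v - v0\<bar> < d \<longrightarrow> (\<forall>t\<in>{-L..L}. \<bar>Y g k h v (Suc j) t - Y g k h v0 (Suc j) t\<bar> < e)"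
  proof (intro exI[of _ "min d1 (e / (2 * (L + 1)))"] conjI allI impI ballI)
    show "0 < min d1 (e / (2 * (L + 1)))" using d1 e L by auto
    fix v t assume v: "\<bar>v - v0\<bar> < min d1 (e / (2 * (L + 1)))" and t: "t \<in> {-L..L}"
    have cv: "continuous_on UNIV (\<lambda>s. k s - g (Y g k h w j (s - h)))" for w
      by (intro continuous_intros k continuous_on_compose2[OF g] continuous_on_compose2[OF Y_cont[OF g k]]) auto
    have lin: "\<bar>(v - v0) * t\<bar> < e / 2"
    proof -
      have "\<bar>(v - v0) * t\<bar> = \<bar>v - v0\<bar> * \<bar>t\<bar>" by (simp add: abs_mult)
      also have "\<dots> \<le> \<bar>v - v0\<bar> * (L + 1)" using t by (intro mult_left_mono) auto
      also have "\<dots> < (e / (2 * (L + 1))) * (L + 1)" using v L by (intro mult_strict_right_mono) auto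
      also have "\<dots> = e / 2" using L by (simp add: field_simps)
      finally show ?thesis .
    qed
    have diff: "Y g k h v (Suc j) t - Y g k h v0 (Suc j) t = (v - v0) * t +
       I2 (\<lambda>s. (k s - g (Y g k h v j (s - h))) - (k s - g (Y g k h v0 j (s - h)))) t"
      using I2_diff[OF continuous_on_subset[OF cv] continuous_on_subset[OF cv], of t v v0]
      by (simp add: algebra_simps)
    show "\<bar>Y g k h v (Suc j) t - Y g k h v0 (Suc j) t\<bar> < e"
    proof (cases "t \<le> 0")
      case True
      then show ?thesis using diff lin e by (simp add: I2_nonpos)
    next
      case False
      have bnd: "\<bar>I2 (\<lambda>s. (k s - g (Y g k h v j (s - h))) - (k s - g (Y g k h v0 j (s - h)))) t\<bar> \<le> e' * t^2"
      proof (rule I2_bound)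
        show "continuous_on {0..t} (\<lambda>s. (k s - g (Y g k h v j (s - h))) - (k s - g (Y g k h v0 j (s - h))))"
          by (intro continuous_intros continuous_on_subset[OF cv]) auto
        show "0 \<le> t" using False by simp
        fix s assume s: "s \<in> {0..t}"
        have sh: "s - h \<in> {-L..L}" using s t h by auto
        have a: "\<bar>Y g k h v j (s - h) - Y g k h v0 j (s - h)\<bar> < min \<eta> 1"
          using d1Y[of v] v sh by auto
        have b: "\<bar>Y g k h v0 j (s - h)\<bar> \<le> Bj" using Bj[OF sh] .
        have "\<bar>g (Y g k h v j (s - h)) - g (Y g k h v0 j (s - h))\<bar> < e'"
          by (rule \<eta>g) (use a b in auto)
        then show "\<bar>(k s - g (Y g k h v j (s - h))) - (k s - g (Y g k h v0 j (s - h)))\<bar> \<le> e'"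
          by simp
      qed
      have "t^2 \<le> L^2" using t False by (intro power_mono) auto
      then have "e' * t^2 \<le> e' * (L^2 + 1)"
        using e'0 by (intro mult_left_mono) auto
      also have "\<dots> = e / 2"
      proof -
        have "0 < L^2 + 1" by (simp add: add_nonneg_pos)
        then show ?thesis unfolding e'_def by (simp add: field_simps)
      qed
      finally show ?thesis using diff lin bnd by linarith
    qed
  qed
qed



declare Y.simps(2) [simp del]

locale shset =
  fixes g k :: "real \<Rightarrow> real" and L h K M \<epsilon> :: real and N :: nat
  assumes g: "continuous_on UNIV g" and k: "continuous_on UNIV k"
    and L: "L > 0" and h: "0 < h" "h \<le> L" and NL: "L \<le> real N * h"
    and M: "M \<ge> 0" and eps: "\<epsilon> \<ge> 0" "\<epsilon> * L^2 \<le> 1/4"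
    and gb: "\<And>x. \<bar>g x\<bar> \<le> M + \<epsilon> * \<bar>x\<bar>"
    and kb: "\<And>t. t \<in> {0..L} \<Longrightarrow> \<bar>k t\<bar> \<le> K"
begin

abbreviation y where "y v \<equiv> Y g k h v (Suc N)"
definition fv where "fv v = (\<lambda>s. k s - g (y v (s - h)))"

lemma K0: "K \<ge> 0" using kb[of 0] L by auto

lemma fv_cont: "continuous_on UNIV (fv v)"
  unfolding fv_def
  by (intro continuous_intros k continuous_on_compose2[OF g] continuous_on_compose2[OF Y_cont[OF g k]]) auto

lemma y_eq: "t \<in> {0..L} \<Longrightarrow> y v t = v * t + I2 (fv v) t"
  unfolding fv_def using Y_eq[OF h(1) NL] by blast

lemma y_neg: "t \<le> 0 \<Longrightarrow> y v t = v * t"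
  by (simp add: I2_nonpos Y.simps)

lemma fv_bound:
  assumes "s \<in> {0..L}" "\<bar>y v (s - h)\<bar> \<le> m"
  shows "\<bar>fv v s\<bar> \<le> K + M + \<epsilon> * m"
proof -
  have "\<bar>fv v s\<bar> \<le> \<bar>k s\<bar> + \<bar>g (y v (s - h))\<bar>" unfolding fv_def by simp
  also have "\<dots> \<le> K + (M + \<epsilon> * \<bar>y v (s - h)\<bar>)" using kb[OF assms(1)] gb by (intro add_mono) auto
  also have "\<epsilon> * \<bar>y v (s - h)\<bar> \<le> \<epsilon> * m" using assms(2) eps by (simp add: mult_left_mono)
  finally show ?thesis by simp
qed

lemma y_bounds:
  shows "\<And>t. t \<in> {-h..L} \<Longrightarrow> \<bar>y v t\<bar> \<le> 2 * (\<bar>v\<bar> * L + L^2 * (K + M))"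
    and "\<bar>y v L - v * L\<bar> \<le> L^2 * (K + M) + (\<bar>v\<bar> * L + L^2 * (K + M)) / 2"
proof -
  have cy: "continuous_on {-h..L} (\<lambda>t. \<bar>y v t\<bar>)"
    by (intro continuous_intros continuous_on_subset[OF Y_cont[OF g k]]) auto
  obtain t0 where t0: "t0 \<in> {-h..L}" and mx: "\<And>t. t \<in> {-h..L} \<Longrightarrow> \<bar>y v t\<bar> \<le> \<bar>y v t0\<bar>"
    using continuous_attains_sup[OF compact_Icc _ cy] h L by auto
  define m where "m = \<bar>y v t0\<bar>"
  have m0: "m \<ge> 0" unfolding m_def by simp
  have I2b: "\<bar>I2 (fv v) t\<bar> \<le> L^2 * (K + M) + m / 4" if t: "t \<in> {0..L}" for t
  proof -
    have "\<bar>I2 (fv v) t\<bar> \<le> (K + M + \<epsilon> * m) * t^2"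
    proof (rule I2_bound)
      show "continuous_on {0..t} (fv v)" using fv_cont by (rule continuous_on_subset) auto
      show "0 \<le> t" using t by simp
      fix s assume s: "s \<in> {0..t}"
      have "s - h \<in> {-h..L}" using s t h by auto
      then show "\<bar>fv v s\<bar> \<le> K + M + \<epsilon> * m"
        using fv_bound[of s v m] mx s t unfolding m_def by auto
    qed
    also have "\<dots> \<le> (K + M + \<epsilon> * m) * L^2"
      using t K0 M eps m0 by (intro mult_left_mono power_mono) auto
    also have "\<dots> = L^2 * (K + M) + (\<epsilon> * L^2) * m" by (simp add: algebra_simps)
    also have "(\<epsilon> * L^2) * m \<le> m / 4" using mult_right_mono[OF eps(2) m0] by simp
    finally show ?thesis by simp
  qed
  have yb: "\<bar>y v t\<bar> \<le> \<bar>v\<bar> * L + L^2 * (K + M) + m / 4" if t: "t \<in> {-h..L}" for t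
  proof (cases "t \<le> 0")
    case True
    have "\<bar>y v t\<bar> = \<bar>v\<bar> * \<bar>t\<bar>" using y_neg[OF True] by (simp add: abs_mult)
    also have "\<dots> \<le> \<bar>v\<bar> * L" using t True h by (intro mult_left_mono) auto
    moreover have "0 \<le> L^2 * (K + M)" using K0 M by simp
    ultimately show ?thesis using m0 by linarith
  next
    case False
    then have t': "t \<in> {0..L}" using t by auto
    have "\<bar>y v t\<bar> \<le> \<bar>v * t\<bar> + \<bar>I2 (fv v) t\<bar>" using y_eq[OF t'] by simp
    also have "\<bar>v * t\<bar> \<le> \<bar>v\<bar> * L" using t' by (simp add: abs_mult mult_left_mono)
    finally show ?thesis using I2b[OF t'] by simp
  qed
  have "m \<le> \<bar>v\<bar> * L + L^2 * (K + M) + m / 4" using yb[OF t0] unfolding m_def .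
  moreover have "0 \<le> \<bar>v\<bar> * L + L^2 * (K + M)" using K0 M L by simp
  moreover have "\<And>m a::real. m \<le> a + m / 4 \<Longrightarrow> 0 \<le> a \<Longrightarrow> m \<le> 2 * a" by linarith
  ultimately have mb: "m \<le> 2 * (\<bar>v\<bar> * L + L^2 * (K + M))" by blast
  show "\<And>t. t \<in> {-h..L} \<Longrightarrow> \<bar>y v t\<bar> \<le> 2 * (\<bar>v\<bar> * L + L^2 * (K + M))"
    using mx mb unfolding m_def by (meson order.trans)
  have "\<bar>y v L - v * L\<bar> = \<bar>I2 (fv v) L\<bar>" using y_eq[of L v] L by simp
  also have "\<dots> \<le> L^2 * (K + M) + m / 4" using I2b[of L] L by simp
  finally show "\<bar>y v L - v * L\<bar> \<le> L^2 * (K + M) + (\<bar>v\<bar> * L + L^2 * (K + M)) / 2"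
    using mb by linarith
qed

definition V where "V = 3 * L * (K + M) + 1"
definition B where "B = 2 * (V * L + L^2 * (K + M))"
definition D where "D = V + L * (K + M + \<epsilon> * B)"

lemma V0: "V > 0" unfolding V_def using K0 M L by (simp add: add_nonneg_pos)

lemma shoot: "\<exists>v. \<bar>v\<bar> \<le> V \<and> y v L = 0"
proof -
  have cont: "continuous_on {-V..V} (\<lambda>v. y v L)"
    unfolding continuous_on_iff
  proof (intro ballI allI impI)
    fix v0 e :: real assume "v0 \<in> {-V..V}" "0 < e"
    obtain d where d: "d > 0" "\<And>v. \<bar>v - v0\<bar> < d \<Longrightarrow> (\<forall>t\<in>{-L..L}. \<bar>y v t - y v0 t\<bar> < e)"
      using Y_contv[OF g k h, of e v0 "Suc N"] \<open>0 < e\<close> by blast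
    show "\<exists>d>0. \<forall>x'\<in>{-V..V}. dist x' v0 < d \<longrightarrow> dist (y x' L) (y v0 L) < e"
      using d L by (intro exI[of _ d]) (auto simp: dist_real_def)
  qed
  have C0: "0 \<le> K + M" using K0 M by simp
  have pos: "y V L \<ge> 0"
  proof -
    have "\<bar>y V L - V * L\<bar> \<le> L^2 * (K + M) + (V * L + L^2 * (K + M)) / 2"
      using y_bounds(2)[of V] V0 by simp
    moreover have "V * L = 3 * (L^2 * (K + M)) + L" unfolding V_def by (simp add: algebra_simps power2_eq_square)
    moreover have "\<And>y W X L::real. \<bar>y - W\<bar> \<le> X + (W + X) / 2 \<Longrightarrow> W = 3 * X + L \<Longrightarrow> 0 < L \<Longrightarrow> 0 \<le> y"
      by (auto simp: abs_le_iff)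
    ultimately show ?thesis using L by blast
  qed
  have neg: "y (-V) L \<le> 0"
  proof -
    have "\<bar>y (-V) L - (-V) * L\<bar> \<le> L^2 * (K + M) + (V * L + L^2 * (K + M)) / 2"
      using y_bounds(2)[of "-V"] V0 by simp
    moreover have "V * L = 3 * (L^2 * (K + M)) + L" unfolding V_def by (simp add: algebra_simps power2_eq_square)
    moreover have "\<And>y W X L::real. \<bar>y - - W\<bar> \<le> X + (W + X) / 2 \<Longrightarrow> W = 3 * X + L \<Longrightarrow> 0 < L \<Longrightarrow> y \<le> 0"
      by (auto simp: abs_le_iff)
    ultimately show ?thesis using L by (metis minus_mult_left)
  qed
  obtain v where "-V \<le> v" "v \<le> V" "y v L = 0"
    using IVT'[of "\<lambda>v. y v L" "-V" 0 V, OF neg pos _ cont] V0 by auto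
  then show ?thesis by (intro exI[of _ v]) auto
qed

lemma ybnd: "\<bar>v\<bar> \<le> V \<Longrightarrow> t \<in> {-h..L} \<Longrightarrow> \<bar>y v t\<bar> \<le> B"
proof -
  assume v: "\<bar>v\<bar> \<le> V" and t: "t \<in> {-h..L}"
  have "\<bar>y v t\<bar> \<le> 2 * (\<bar>v\<bar> * L + L^2 * (K + M))" by (rule y_bounds(1)[OF t])
  also have "\<dots> \<le> B" unfolding B_def using v L by (simp add: mult_right_mono)
  finally show ?thesis .
qed

lemma fv_bnd: "\<bar>v\<bar> \<le> V \<Longrightarrow> s \<in> {0..L} \<Longrightarrow> \<bar>fv v s\<bar> \<le> K + M + \<epsilon> * B"
  by (rule fv_bound) (use h in \<open>auto intro!: ybnd\<close>)

lemma ylip: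
  assumes v: "\<bar>v\<bar> \<le> V" and t: "0 \<le> t'" "t' \<le> t" "t \<le> L"
  shows "\<bar>y v t - y v t'\<bar> \<le> D * (t - t')"
proof -
  have B0: "0 \<le> K + M + \<epsilon> * B" using fv_bnd[OF v, of 0] L by (meson abs_ge_zero atLeastAtMost_iff less_eq_real_def order_trans)
  have "y v t - y v t' = v * (t - t') + (I2 (fv v) t - I2 (fv v) t')"
    using y_eq[of t v] y_eq[of t' v] t by (simp add: algebra_simps)
  moreover have "\<bar>v * (t - t') + (I2 (fv v) t - I2 (fv v) t')\<bar> \<le> \<bar>v * (t - t')\<bar> + \<bar>I2 (fv v) t - I2 (fv v) t'\<bar>"
    by (rule abs_triangle_ineq)
  moreover have "\<bar>v * (t - t')\<bar> = \<bar>v\<bar> * (t - t')" using t by (simp add: abs_mult)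
  ultimately have "\<bar>y v t - y v t'\<bar> \<le> \<bar>v\<bar> * (t - t') + \<bar>I2 (fv v) t - I2 (fv v) t'\<bar>"
    by simp
  also have "\<bar>I2 (fv v) t - I2 (fv v) t'\<bar> \<le> (K + M + \<epsilon> * B) * t * (t - t')"
    by (rule I2_incr) (use t fv_bnd[OF v] in \<open>auto intro: continuous_on_subset[OF fv_cont]\<close>)
  also have "\<dots> \<le> (K + M + \<epsilon> * B) * L * (t - t')"
    using B0 t by (intro mult_right_mono mult_left_mono) auto
  also have "\<bar>v\<bar> * (t - t') \<le> V * (t - t')" using v t by (intro mult_right_mono) auto
  finally show ?thesis unfolding D_def by (simp add: algebra_simps)
qed

lemma B0: "B \<ge> 0" unfolding B_def using V0 L K0 M by simp

lemma D_ge_V: "V \<le> D"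
proof -
  have "0 \<le> K + M + \<epsilon> * B" using K0 M eps B0 by simp
  then show ?thesis unfolding D_def using L by simp
qed

lemma ydelay:
  assumes v: "\<bar>v\<bar> \<le> V" and s: "s \<in> {0..L}"
  shows "\<bar>y v (s - h) - y v s\<bar> \<le> D * h"
proof (cases "h \<le> s")
  case True
  then show ?thesis using ylip[OF v, of "s - h" s] s h by (auto simp: abs_minus_commute)
next
  case False
  have "\<bar>y v (s - h) - y v s\<bar> \<le> \<bar>y v (s - h)\<bar> + \<bar>y v s - y v 0\<bar>"
    using y_neg[of 0 v] by simp
  also have "\<bar>y v (s - h)\<bar> = \<bar>v\<bar> * (h - s)" using y_neg[of "s - h" v] False by (simp add: abs_mult)
  also have "\<dots> \<le> D * (h - s)" using v D_ge_V False by (intro mult_right_mono) auto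
  also have "\<bar>y v s - y v 0\<bar> \<le> D * (s - 0)" using ylip[OF v, of 0 s] s by auto
  finally show ?thesis by (simp add: algebra_simps)
qed

end



lemma limit_solution:
  fixes g k :: "real \<Rightarrow> real"
  assumes g: "continuous_on UNIV g" and k: "continuous_on UNIV k"
    and L: "L > 0" and M: "M \<ge> 0" and eps: "\<epsilon> \<ge> 0" "\<epsilon> * L^2 \<le> 1/4"
    and gb: "\<And>x. \<bar>g x\<bar> \<le> M + \<epsilon> * \<bar>x\<bar>"
    and kb: "\<And>t. t \<in> {0..L} \<Longrightarrow> \<bar>k t\<bar> \<le> K"
  shows "\<exists>u. continuous_on {0..L} u \<and>
     (\<forall>t\<in>{0..L}. u t = I2 (\<lambda>s. k s - g (u s)) t - t * I2 (\<lambda>s. k s - g (u s)) L / L)"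
proof -
  define hh where "hh n = L / (real n + 1)" for n :: nat
  define VV where "VV = 3 * L * (K + M) + 1"
  define BB where "BB = 2 * (VV * L + L^2 * (K + M))"
  define DD where "DD = VV + L * (K + M + \<epsilon> * BB)"
  have hh: "0 < hh n" "hh n \<le> L" "L \<le> real (Suc n) * hh n" for n
    using L by (auto simp: hh_def field_simps)
  have S: "shset g k L (hh n) K M \<epsilon>  (Suc n)" for n
    using g k L hh M eps gb kb by unfold_locales auto
  have "\<forall>n. \<exists>v. \<bar>v\<bar> \<le> VV \<and> Y g k (hh n) v (Suc (Suc n)) L = 0"
  proof
    fix n
    interpret shset g k L "hh n" K M \<epsilon> "Suc n" by (rule S)
    show "\<exists>v. \<bar>v\<bar> \<le> VV \<and> Y g k (hh n) v (Suc (Suc n)) L = 0"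
      using shoot unfolding VV_def shset.V_def[OF S] by simp
  qed
  then obtain vs where vs: "\<And>n. \<bar>vs n\<bar> \<le> VV" "\<And>n. Y g k (hh n) (vs n) (Suc (Suc n)) L = 0"
    by metis
  define F where "F n = Y g k (hh n) (vs n) (Suc (Suc n))" for n
  define fn where "fn n = (\<lambda>s. k s - g (F n (s - hh n)))" for n
  have Fb: "\<bar>F n t\<bar> \<le> BB" if "t \<in> {-hh n..L}" for n t
  proof -
    interpret shset g k L "hh n" K M \<epsilon> "Suc n" by (rule S)
    show ?thesis using ybnd[of "vs n" t] vs that
      unfolding F_def BB_def VV_def shset.B_def[OF S] shset.V_def[OF S] by simp
  qed
  have Flip: "\<bar>F n t - F n t'\<bar> \<le> DD * (t - t')" if "0 \<le> t'" "t' \<le> t" "t \<le> L" for n t t'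
  proof -
    interpret shset g k L "hh n" K M \<epsilon> "Suc n" by (rule S)
    show ?thesis using ylip[of "vs n" t' t] vs that
      unfolding F_def BB_def VV_def DD_def shset.B_def[OF S] shset.V_def[OF S] shset.D_def[OF S] by simp
  qed
  have Fdel: "\<bar>F n (s - hh n) - F n s\<bar> \<le> DD * hh n" if "s \<in> {0..L}" for n s
  proof -
    interpret shset g k L "hh n" K M \<epsilon> "Suc n" by (rule S)
    show ?thesis using ydelay[of "vs n" s] vs that
      unfolding F_def BB_def VV_def DD_def shset.B_def[OF S] shset.V_def[OF S] shset.D_def[OF S] by simp
  qed
  have Feq: "F n t = vs n * t + I2 (fn n) t" if "t \<in> {0..L}" for n t
  proof -
    interpret shset g k L "hh n" K M \<epsilon> "Suc n" by (rule S)
    show ?thesis using y_eq[OF that, of "vs n"] unfolding F_def fn_def fv_def by simp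
  qed
  have fncont: "continuous_on UNIV (fn n)" for n
  proof -
    interpret shset g k L "hh n" K M \<epsilon> "Suc n" by (rule S)
    show ?thesis using fv_cont[of "vs n"] unfolding F_def fn_def fv_def by simp
  qed
  have FL: "F n L = 0" for n using vs(2) unfolding F_def by simp
  have D0: "0 \<le> DD"
  proof -
    have "0 \<le> \<bar>F 0 L - F 0 0\<bar>" by simp
    also have "\<dots> \<le> DD * (L - 0)" using Flip[of 0 L 0] L by simp
    finally show ?thesis using L by (simp add: zero_le_mult_iff)
  qed
  obtain u r where ucont: "continuous_on {0..L} u" and r: "strict_mono (r :: nat \<Rightarrow> nat)"
    and conv: "\<And>e. 0 < e \<Longrightarrow> \<exists>N. \<forall>n x. n \<ge> N \<and> x \<in> {0..L} \<longrightarrow> norm (F (r n) x - u x) < e"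
  proof (rule Arzela_Ascoli[of "{0..L}" F BB])
    show "compact {0..L::real}" by simp
    show "norm (F n x) \<le> BB" if "x \<in> {0..L}" for n x using Fb[of x n] that hh[of n] by auto
    fix x e :: real assume x: "x \<in> {0..L}" and e: "0 < e"
    show "\<exists>d>0. \<forall>n y. y \<in> {0..L} \<and> norm (x - y) < d \<longrightarrow> norm (F n x - F n y) < e"
    proof (intro exI[of _ "e / (DD + 1)"] conjI allI impI)
      show "0 < e / (DD + 1)" using e D0 by simp
      fix n y assume ny: "y \<in> {0..L} \<and> norm (x - y) < e / (DD + 1)"
      have "\<bar>F n x - F n y\<bar> \<le> DD * \<bar>x - y\<bar>"
      proof (cases "y \<le> x")
        case True then show ?thesis using Flip[of y x n] x ny by auto
      next
        case False then show ?thesis using Flip[of x y n] x ny by (auto simp: abs_minus_commute)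
      qed
      also have "\<dots> \<le> (DD + 1) * \<bar>x - y\<bar>" by (simp add: mult_right_mono)
      also have "\<dots> < (DD + 1) * (e / (DD + 1))" using ny D0 by (intro mult_strict_left_mono) auto
      also have "\<dots> = e" using D0 by simp
      finally show "norm (F n x - F n y) < e" by simp
    qed
  qed blast
  have ub: "\<bar>u t\<bar> \<le> BB" if t: "t \<in> {0..L}" for t
  proof (rule ccontr)
    assume "\<not> \<bar>u t\<bar> \<le> BB"
    then have "0 < \<bar>u t\<bar> - BB" by simp
    from conv[OF this] obtain N where "\<forall>n x. n \<ge> N \<and> x \<in> {0..L} \<longrightarrow> norm (F (r n) x - u x) < \<bar>u t\<bar> - BB" by blast
    then have "\<bar>F (r N) t - u t\<bar> < \<bar>u t\<bar> - BB" using t by auto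
    moreover have "\<bar>F (r N) t\<bar> \<le> BB" using Fb[of t "r N"] t hh[of "r N"] by auto
    ultimately show False by linarith
  qed
  define f where "f = (\<lambda>s. k s - g (u s))"
  have fcont: "continuous_on {0..L} f" unfolding f_def
    by (intro continuous_intros continuous_on_subset[OF k] continuous_on_compose2[OF g ucont]) auto
  have "u t = I2 f t - t * I2 f L / L" if t: "t \<in> {0..L}" for t
  proof -
    define R where "R = I2 f t - t * I2 f L / L"
    have "\<bar>u t - R\<bar> < e" if e: "e > 0" for e
    proof -
      have uc: "uniformly_continuous_on {-BB..BB} g"
        by (rule compact_uniformly_continuous[OF continuous_on_subset[OF g] compact_Icc]) auto
      define e' where "e' = e / (3 * (L^2 + 1))"
      have Lp: "0 < L^2 + 1" by (simp add: add_nonneg_pos)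
      have e'0: "e' > 0" using e Lp unfolding e'_def by simp
      obtain \<eta> where \<eta>: "\<eta> > 0" and \<eta>g: "\<And>x y. x \<in> {-BB..BB} \<Longrightarrow> y \<in> {-BB..BB} \<Longrightarrow> \<bar>x - y\<bar> < \<eta> \<Longrightarrow> \<bar>g x - g y\<bar> < e'"
        using uc e'0 unfolding uniformly_continuous_on_def dist_real_def by metis
      obtain N1 where N1: "\<And>n x. n \<ge> N1 \<Longrightarrow> x \<in> {0..L} \<Longrightarrow> \<bar>F (r n) x - u x\<bar> < min (\<eta>/2) (e/3)"
        using conv[of "min (\<eta>/2) (e/3)"] \<eta> e by auto
      obtain N2 :: nat where N2: "2 * DD * L / \<eta> < real N2" using reals_Archimedean2 by blast
      define n where "n = max N1 N2"
      define m where "m = r n"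
      have nm: "n \<le> m" unfolding m_def using seq_suble[OF r] by simp
      have hm: "DD * hh m < \<eta> / 2"
      proof -
        have "hh m \<le> hh N2" unfolding hh_def using L nm by (intro divide_left_mono) (auto simp: n_def)
        then have "DD * hh m \<le> DD * hh N2" using D0 by (simp add: mult_left_mono)
        also have "DD * hh N2 = DD * L / (real N2 + 1)" unfolding hh_def by simp
        also have "\<dots> < \<eta> / 2"
        proof -
          have "2 * DD * L < \<eta> * real N2" using N2 \<eta> by (simp add: field_simps)
          then have "DD * L < \<eta> / 2 * (real N2 + 1)" using \<eta> by (simp add: field_simps)
          then show ?thesis by (simp add: field_simps)
        qed
        finally show ?thesis .
      qed
      have close: "\<bar>fn m s - f s\<bar> \<le> e'" if s: "s \<in> {0..L}" for s
      proof -
        have a: "\<bar>F m s - u s\<bar> < \<eta> / 2" using N1[of n s] s unfolding m_def n_def by auto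
        have b: "\<bar>F m (s - hh m) - F m s\<bar> \<le> DD * hh m" using Fdel[OF s] .
        have c: "\<bar>F m (s - hh m) - u s\<bar> < \<eta>" using a b hm by linarith
        have d: "\<bar>F m (s - hh m)\<bar> \<le> BB" using Fb[of "s - hh m" m] s hh[of m] by auto
        have "\<bar>g (F m (s - hh m)) - g (u s)\<bar> < e'" by (rule \<eta>g) (use c d ub[OF s] in auto)
        then show ?thesis unfolding fn_def f_def by simp
      qed
      have I2c: "\<bar>I2 (fn m) \<tau> - I2 f \<tau>\<bar> \<le> e' * L^2" if tau: "\<tau> \<in> {0..L}" for \<tau>
      proof -
        have "I2 (fn m) \<tau> - I2 f \<tau> = I2 (\<lambda>s. fn m s - f s) \<tau>"
          by (rule I2_diff[symmetric]) (use tau in \<open>auto intro: continuous_on_subset[OF fncont] continuous_on_subset[OF fcont]\<close>)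
        also have "\<bar>\<dots>\<bar> \<le> e' * \<tau>^2"
          by (rule I2_bound) (use tau close in \<open>auto intro!: continuous_intros intro: continuous_on_subset[OF fncont] continuous_on_subset[OF fcont]\<close>)
        also have "\<dots> \<le> e' * L^2" using tau e'0 by (intro mult_left_mono power_mono) auto
        finally show ?thesis .
      qed
      have vsm: "vs m = - I2 (fn m) L / L" using Feq[of L m] FL[of m] L by (simp add: field_simps)
      have "F m t - R = (I2 (fn m) t - I2 f t) - (t / L) * (I2 (fn m) L - I2 f L)"
        using Feq[OF t, of m] L unfolding vsm R_def by (simp add: field_simps)
      then have "\<bar>F m t - R\<bar> \<le> \<bar>I2 (fn m) t - I2 f t\<bar> + \<bar>t / L\<bar> * \<bar>I2 (fn m) L - I2 f L\<bar>"
      proof -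
        assume eq: "F m t - R = (I2 (fn m) t - I2 f t) - (t / L) * (I2 (fn m) L - I2 f L)"
        have "\<bar>(I2 (fn m) t - I2 f t) - (t / L) * (I2 (fn m) L - I2 f L)\<bar> \<le> \<bar>I2 (fn m) t - I2 f t\<bar> + \<bar>(t / L) * (I2 (fn m) L - I2 f L)\<bar>"
          by (rule abs_triangle_ineq4)
        then show ?thesis unfolding eq abs_mult .
      qed
      also have "\<dots> \<le> e' * L^2 + 1 * (e' * L^2)"
        using I2c[OF t] I2c[of L] L t by (intro add_mono mult_mono) auto
      also have "\<dots> < 2 * e / 3"
      proof -
        have "e' * L^2 < e / 3" unfolding e'_def using e Lp by (simp add: field_simps)
        then show ?thesis by simp
      qed
      finally have "\<bar>F m t - R\<bar> < 2 * e / 3" .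
      moreover have "\<bar>F m t - u t\<bar> < e / 3" using N1[of n t] t unfolding m_def n_def by auto
      ultimately show ?thesis by linarith
    qed
    then have "u t = R"
      by (metis abs_ge_zero diff_self_eq_0 less_le abs_eq_0 eq_iff_diff_eq_0)
    then show ?thesis unfolding R_def .
  qed
  then show ?thesis using ucont unfolding f_def by blast
qed



definition hat :: "real \<Rightarrow> (real \<Rightarrow> real) \<Rightarrow> real \<Rightarrow> real" where
  "hat L u r = (if r \<le> L then u r else - u (2 * L - r))"

definition oext :: "real \<Rightarrow> (real \<Rightarrow> real) \<Rightarrow> real \<Rightarrow> real" where
  "oext L u t = hat L u (t - of_int \<lfloor>t / (2 * L)\<rfloor> * (2 * L))"

lemma floor_mod_bounds:
  fixes P t :: real assumes P: "P > 0"
  shows "0 \<le> t - of_int \<lfloor>t / P\<rfloor> * P" "t - of_int \<lfloor>t / P\<rfloor> * P < P"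
proof -
  have a: "of_int \<lfloor>t / P\<rfloor> \<le> t / P" by linarith
  have b: "t / P < of_int \<lfloor>t / P\<rfloor> + 1" by linarith
  from a have "of_int \<lfloor>t / P\<rfloor> * P \<le> t" by (metis P pos_le_divide_eq)
  then show "0 \<le> t - of_int \<lfloor>t / P\<rfloor> * P" by simp
  from b have "t < (of_int \<lfloor>t / P\<rfloor> + 1) * P" by (metis P pos_divide_less_eq)
  then show "t - of_int \<lfloor>t / P\<rfloor> * P < P" by (simp add: algebra_simps)
qed

context
  fixes L :: real and u :: "real \<Rightarrow> real"
  assumes L: "L > 0" and uc: "continuous_on {0..L} u" and u0: "u 0 = 0" and uL: "u L = 0"
begin

lemma hat_0: "hat L u 0 = 0" using L u0 by (simp add: hat_def)
lemma hat_P: "hat L u (2 * L) = 0" using L u0 by (simp add: hat_def)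

lemma hat_refl: "r \<in> {0..2*L} \<Longrightarrow> hat L u (2 * L - r) = - hat L u r"
  using uL by (auto simp: hat_def)

lemma hat_cont: "continuous_on {0..2*L} (hat L u)"
proof -
  have "continuous_on {0..2*L} (\<lambda>r. if r \<le> L then u r else - u (2 * L - r))"
  proof (rule continuous_on_cases_1)
    show "continuous_on {t \<in> {0..2 * L}. t \<le> L} u"
      by (rule continuous_on_subset[OF uc]) auto
    show "continuous_on {t \<in> {0..2 * L}. L \<le> t} (\<lambda>r. - u (2 * L - r))"
      by (intro continuous_intros continuous_on_compose2[OF uc]) auto
    show "L \<in> {0..2 * L} \<Longrightarrow> u L = - u (2 * L - L)" using uL by simp
  qed
  then show ?thesis unfolding hat_def .
qed

lemma floor0: "t \<in> {0..<2*L} \<Longrightarrow> \<lfloor>t / (2 * L)\<rfloor> = 0"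
  using L by (intro floor_unique) (auto simp: field_simps)

lemma oext_eq: "t \<in> {0..L} \<Longrightarrow> oext L u t = u t"
  using floor0[of t] L by (auto simp: oext_def hat_def)

lemma oext_per: "periodic_fun (2 * L) (oext L u)"
  unfolding periodic_fun_def
proof
  fix t
  have "\<lfloor>(t + 2 * L) / (2 * L)\<rfloor> = \<lfloor>t / (2 * L)\<rfloor> + 1"
  proof -
    have "(t + 2 * L) / (2 * L) = t / (2 * L) + of_int 1" using L by (simp add: field_simps)
    then show ?thesis by (simp add: floor_add_int[symmetric])
  qed
  then show "oext L u (t + 2 * L) = oext L u t" unfolding oext_def by (simp add: algebra_simps)
qed

lemma oext_odd: "odd_fun (oext L u)"
  unfolding odd_fun_def
proof
  fix t
  define P where "P = 2 * L"
  have P: "P > 0" using L unfolding P_def by simp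
  define r where "r = t - of_int \<lfloor>t / P\<rfloor> * P"
  define r' where "r' = -t - of_int \<lfloor>-t / P\<rfloor> * P"
  have r: "0 \<le> r" "r < P" using floor_mod_bounds[OF P, of t] unfolding r_def by auto
  have r': "0 \<le> r'" "r' < P" using floor_mod_bounds[OF P, of "-t"] unfolding r'_def by auto
  define j where "j = - (\<lfloor>t / P\<rfloor> + \<lfloor>-t / P\<rfloor>)"
  have sum: "r + r' = of_int j * P" unfolding r_def r'_def j_def by (simp add: algebra_simps)
  have "0 \<le> of_int j * P" "of_int j * P < 2 * P" using r r' sum by linarith+
  then have "0 \<le> j" "j < 2" using P by (auto simp: zero_le_mult_iff mult_less_cancel_right2[symmetric])
  then have "j = 0 \<or> j = 1" by auto
  then have cases: "(r = 0 \<and> r' = 0) \<or> r' = P - r" using sum r r' by auto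
  have "oext L u t = hat L u r" "oext L u (-t) = hat L u r'"
    unfolding oext_def r_def r'_def P_def by simp_all
  moreover have "hat L u r' = - hat L u r"
    using cases hat_0 hat_refl[of r] r unfolding P_def by auto
  ultimately show "oext L u (- t) = - oext L u t" by simp
qed

lemma oext_cont: "continuous_on UNIV (oext L u)"
proof -
  define P where "P = 2 * L"
  have P: "P > 0" using L unfolding P_def by simp
  have hc: "continuous_on {0..P} (hat L u)" using hat_cont unfolding P_def .
  have e1: "oext L u x = hat L u x" if "x \<in> {0..P}" for x
  proof (cases "x = P")
    case True
    have "\<lfloor>x / (2 * L)\<rfloor> = 1" using True P unfolding P_def by simp
    then show ?thesis using True hat_0 hat_P unfolding oext_def P_def by simp
  next
    case False
    then show ?thesis using floor0[of x] that unfolding oext_def P_def by auto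
  qed
  have e2: "oext L u x = hat L u (x + P)" if "x \<in> {-P..0}" for x
  proof (cases "x = 0")
    case True
    then show ?thesis using hat_0 hat_P unfolding oext_def P_def by simp
  next
    case False
    have "\<lfloor>x / (2 * L)\<rfloor> = -1" using False that P unfolding P_def
      by (intro floor_unique) (auto simp: field_simps)
    then show ?thesis unfolding oext_def P_def by simp
  qed
  have c: "continuous_on {-P..P} (\<lambda>x. if x \<le> 0 then hat L u (x + P) else hat L u x)"
  proof (rule continuous_on_cases_1)
    show "continuous_on {t \<in> {-P..P}. t \<le> 0} (\<lambda>x. hat L u (x + P))"
      by (intro continuous_on_compose2[OF hc] continuous_intros) auto
    show "continuous_on {t \<in> {-P..P}. 0 \<le> t} (hat L u)"
      by (rule continuous_on_subset[OF hc]) auto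
    show "0 \<in> {-P..P} \<Longrightarrow> hat L u (0 + P) = hat L u 0" using hat_0 hat_P unfolding P_def by simp
  qed
  have c2: "continuous_on {-P..P} (oext L u)"
    by (rule continuous_on_eq[OF c]) (use e1 e2 in auto)
  have ic: "isCont (oext L u) x" if "x \<in> {0..<P}" for x
    by (rule continuous_on_interior[OF c2]) (use that P in auto)
  have per: "oext L u (y + of_int m * P) = oext L u y" for y m
    using per_int[OF oext_per] unfolding P_def by blast
  show ?thesis
  proof (intro continuous_at_imp_continuous_on ballI)
    fix t :: real
    define m where "m = \<lfloor>t / P\<rfloor>"
    define x where "x = t - of_int m * P"
    have x: "x \<in> {0..<P}" using floor_mod_bounds[OF P, of t] unfolding x_def m_def by auto
    have i1: "isCont (\<lambda>y. y - of_int m * P) t" by (intro continuous_intros)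
    have i2: "isCont (oext L u) ((\<lambda>y. y - of_int m * P) t)" using ic[OF x] unfolding x_def by simp
    have "isCont (\<lambda>y. oext L u (y - of_int m * P)) t" using isCont_o2[OF i1 i2] by simp
    moreover have "(\<lambda>y. oext L u (y - of_int m * P)) = oext L u"
    proof
      fix y show "oext L u (y - of_int m * P) = oext L u y"
        using per[of "y - of_int m * P" m] by simp
    qed
    ultimately show "isCont (oext L u) t" by simp
  qed
qed

end



theorem theorem1:
  fixes T :: real and g k :: "real \<Rightarrow> real"
  assumes "T > 0"
    and "continuous_on UNIV g" and "odd_fun g" and "sublinear g"
    and "continuous_on UNIV k" and "odd_fun k" and "periodic_fun T k"
    and "(1 / T) * integral {0..T} k = 0"
  shows "(\<exists>u. C2_solution g k u \<and> odd_fun u \<and> periodic_fun T u) \<and>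
         (\<exists>B. \<forall>u. C2_solution g k u \<and> odd_fun u \<and> periodic_fun T u \<longrightarrow>
                 (\<forall>t. \<bar>u t\<bar> \<le> B))"
proof -
  note T = assms(1) and g = assms(2) and go = assms(3) and gs = assms(4)
    and k = assms(5) and ko = assms(6) and kp = assms(7)
  define L where "L = T / 2"
  have L: "L > 0" using T unfolding L_def by simp
  have TL: "T = 2 * L" unfolding L_def by simp
  obtain K where kb: "\<And>t. t \<in> {0..L} \<Longrightarrow> \<bar>k t\<bar> \<le> K"
  proof -
    have "bounded (k ` {0..L})"
      by (rule compact_imp_bounded[OF compact_continuous_image[OF continuous_on_subset[OF k] compact_Icc]]) auto
    then obtain K where "\<forall>x\<in>k ` {0..L}. norm x \<le> K" unfolding bounded_iff by blast
    then show ?thesis using that by force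
  qed
  define \<epsilon> where "\<epsilon> = 1 / (4 * L^2)"
  have eps: "\<epsilon> > 0" "\<epsilon> * L^2 \<le> 1/4" using L unfolding \<epsilon>_def by auto
  obtain M where M: "M > 0" and gb: "\<And>x. \<bar>g x\<bar> \<le> M + \<epsilon> * \<bar>x\<bar>"
    using gs eps unfolding sublinear_def by blast
  have g0: "g 0 = 0" using go unfolding odd_fun_def by (metis add.inverse_neutral equal_neg_zero)
  have part2: "\<exists>B. \<forall>u. C2_solution g k u \<and> odd_fun u \<and> periodic_fun T u \<longrightarrow> (\<forall>t. \<bar>u t\<bar> \<le> B)"
  proof (intro exI[of _ "2 * L^2 * (K + M)"] allI impI)
    fix u t assume "C2_solution g k u \<and> odd_fun u \<and> periodic_fun T u"
    then have C2: "C2_solution g k u" and uo: "odd_fun u" and up: "periodic_fun T u" by auto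
    obtain u' u'' where d1: "\<And>t. (u has_real_derivative u' t) (at t)"
      and d2: "\<And>t. (u' has_real_derivative u'' t) (at t)" and eq: "\<And>t. u'' t + g (u t) = k t"
      using C2 unfolding C2_solution_def by blast
    have u0: "u 0 = 0" using uo unfolding odd_fun_def by (metis add.inverse_neutral equal_neg_zero)
    have uL: "u L = 0"
    proof -
      have "u L = u (-L + T)" using TL by simp
      also have "\<dots> = u (-L)" using up unfolding periodic_fun_def by blast
      also have "\<dots> = - u L" using uo unfolding odd_fun_def by blast
      finally show ?thesis by simp
    qed
    have "\<And>s. s \<in> {0..T/2} \<Longrightarrow> \<bar>u s\<bar> \<le> 2 * L^2 * (K + M)"
      using apriori[OF L _ _ eps(2) gb kb d1 d2 eq u0 uL] M eps unfolding L_def by auto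
    then show "\<bar>u t\<bar> \<le> 2 * L^2 * (K + M)" by (rule odd_per_bound[OF T uo up])
  qed
  obtain u where uc: "continuous_on {0..L} u" and ueq:
     "\<And>t. t \<in> {0..L} \<Longrightarrow> u t = I2 (\<lambda>s. k s - g (u s)) t - t * I2 (\<lambda>s. k s - g (u s)) L / L"
    using limit_solution[OF g k L _ _ eps(2) gb kb] M eps by auto
  define f where "f = (\<lambda>s. k s - g (u s))"
  have u0: "u 0 = 0" using ueq[of 0] L by (simp add: I2_nonpos f_def)
  have uL: "u L = 0" using ueq[of L] L by simp
  define W where "W = oext L u"
  have Wc: "continuous_on UNIV W" unfolding W_def by (rule oext_cont[OF L uc u0 uL])
  have Wo: "odd_fun W" unfolding W_def by (rule oext_odd[OF L uc u0 uL])
  have Wp: "periodic_fun (2 * L) W" unfolding W_def by (rule oext_per[OF L uc u0 uL])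
  have Weq: "\<And>t. t \<in> {0..L} \<Longrightarrow> W t = u t" unfolding W_def by (rule oext_eq[OF L uc u0 uL])
  define fW where "fW = (\<lambda>s. k s - g (W s))"
  have fWc: "continuous_on UNIV fW" unfolding fW_def
    by (intro continuous_intros k continuous_on_compose2[OF g Wc]) auto
  have fWo: "odd_fun fW" using ko go Wo unfolding fW_def odd_fun_def by simp
  have fWp: "periodic_fun (2 * L) fW" using kp Wp TL unfolding fW_def periodic_fun_def by simp
  define \<Psi> where "\<Psi> = prim (prim fW)"
  define U where "U = (\<lambda>t. \<Psi> t - t * \<Psi> L / L)"
  note SC = sol_construct[OF L fWc fWo fWp]
  have Uo: "odd_fun U" using SC(1) unfolding U_def \<Psi>_def .
  have Up: "periodic_fun (2 * L) U" using SC(2) unfolding U_def \<Psi>_def .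
  have PsiI: "\<Psi> t = I2 f t" if "t \<in> {0..L}" for t
  proof -
    have "\<Psi> t = I2 fW t" unfolding \<Psi>_def by (rule I2_prim[OF fWc]) (use that in auto)
    also have "\<dots> = I2 f t" by (rule I2_cong) (use that Weq in \<open>auto simp: fW_def f_def\<close>)
    finally show ?thesis .
  qed
  have UW0: "U t = W t" if "t \<in> {0..T/2}" for t
  proof -
    have t: "t \<in> {0..L}" using that unfolding L_def .
    have "U t = I2 f t - t * I2 f L / L" unfolding U_def using PsiI[OF t] PsiI[of L] L by simp
    also have "\<dots> = u t" using ueq[OF t] unfolding f_def by simp
    finally show ?thesis using Weq[OF t] by simp
  qed
  have UW: "U t = W t" for t
    by (rule odd_per_eq[OF T Uo _ Wo _ UW0]) (use Up Wp TL in auto)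
  have C2: "C2_solution g k U"
    unfolding C2_solution_def
  proof (intro exI conjI allI)
    show "(U has_real_derivative (prim fW t - \<Psi> L / L)) (at t)" for t
      using SC(3) unfolding U_def \<Psi>_def .
    show "((\<lambda>t. prim fW t - \<Psi> L / L) has_real_derivative fW t) (at t)" for t
      using SC(4) unfolding \<Psi>_def .
    show "continuous_on UNIV fW" by (rule fWc)
    show "fW t + g (U t) = k t" for t using UW[of t] unfolding fW_def by simp
  qed
  have "\<exists>u. C2_solution g k u \<and> odd_fun u \<and> periodic_fun T u"
    using C2 Uo Up TL by blast
  then show ?thesis using part2 by blast
qed


end
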